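(* Let $n$ be an odd integer $\ge 3$, $F_2$ the free group on $a,b$, and $R_{\mathrm{Heis}_n}$ the kernel of the surjection $F_2\to H_n$ with $a\mapsto\alpha$, $b\mapsto\beta$. Then $R_{\mathrm{Heis}_n}$ is a characteristic subgroup of $F_2$, i.e. $\phi(R_{\mathrm{Heis}_n})=R_{\mathrm{Heis}_n}$ for every $\phi\in\operatorname{Aut}(F_2)$.
   Context: $H_n$ is the group of $3\times3$ upper unitriangular matrices over $\mathbb{Z}/n\mathbb{Z}$; $\alpha$ has entry $1$ at position $(1,2)$ and $\beta$ has entry $1$ at position $(2,3)$, all other off-diagonal entries zero. *)

theory Defs
  imports "HOL-Algebra.Algebra"
begin

text \<open>Generators: False = a, True = b. A letter is (inverted?, generator).
  Elements of F_2 are freely reduced words; multiplication is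
  concatenation followed by free reduction.\<close>

type_synonym letter = "bool \<times> bool"

definition letter_inv :: "letter \<Rightarrow> letter" where
  "letter_inv l = (\<not> fst l, snd l)"

fun reduce :: "letter list \<Rightarrow> letter list" where
  "reduce [] = []"
| "reduce (x # xs) = (case reduce xs of
       [] \<Rightarrow> [x]
     | y # ys \<Rightarrow> (if y = letter_inv x then ys else x # y # ys))"

fun is_reduced :: "letter list \<Rightarrow> bool" where
  "is_reduced [] = True"
| "is_reduced [x] = True"
| "is_reduced (x # y # ys) = (y \<noteq> letter_inv x \<and> is_reduced (y # ys))"

definition F2 :: "letter list monoid" where
  "F2 = \<lparr> carrier = {w. is_reduced w},
          monoid.mult = (\<lambda>u v. reduce (u @ v)),
          one = [] \<rparr>"

text \<open>The triple (x, y, z) represents the upper unitriangular matrix with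
  entry x at (1,2), y at (2,3), z at (1,3), entries taken in {0..n-1}.
  Matrix multiplication gives (x,y,z)(x',y',z') = (x+x', y+y', z+z'+x*y').\<close>

definition Heis :: "int \<Rightarrow> (int \<times> int \<times> int) monoid" where
  "Heis n = \<lparr> carrier = {(x, y, z). 0 \<le> x \<and> x < n \<and> 0 \<le> y \<and> y < n \<and> 0 \<le> z \<and> z < n},
              monoid.mult = (\<lambda>(x, y, z) (x', y', z').
                        ((x + x') mod n, (y + y') mod n, (z + z' + x * y') mod n)),
              one = (0, 0, 0) \<rparr>"

definition heis_alpha :: "int \<times> int \<times> int" where
  "heis_alpha = (1, 0, 0)"

definition heis_beta :: "int \<times> int \<times> int" where
  "heis_beta = (0, 1, 0)"

definition letter_img :: "int \<Rightarrow> letter \<Rightarrow> int \<times> int \<times> int" where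
  "letter_img n l = (let g = (if snd l then heis_beta else heis_alpha)
                     in if fst l then inv\<^bsub>Heis n\<^esub> g else g)"

definition heis_hom :: "int \<Rightarrow> letter list \<Rightarrow> int \<times> int \<times> int" where
  "heis_hom n w = foldr (\<lambda>l acc. letter_img n l \<otimes>\<^bsub>Heis n\<^esub> acc) w \<one>\<^bsub>Heis n\<^esub>"

definition R_Heis :: "int \<Rightarrow> letter list set" where
  "R_Heis n = kernel F2 (Heis n) (heis_hom n)"

end

theory Submission
  imports Defs
begin

lemma mod_eqI: "(n::int) dvd (a - b) \<Longrightarrow> a mod n = b mod n"
  by (simp add: mod_eq_dvd_iff)
lemma mod_0I: "(n::int) dvd a \<Longrightarrow> a mod n = 0"
  by (simp add: mod_eq_0_iff_dvd)
lemma mdef: "(x::int) mod n = x - n * (x div n)"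
  by (simp add: minus_div_mult_eq_mod [symmetric] mult.commute)

lemma Heis_carrier_iff: "(x,y,z) \<in> carrier (Heis n) \<longleftrightarrow> 0 \<le> x \<and> x < n \<and> 0 \<le> y \<and> y < n \<and> 0 \<le> z \<and> z < n"
  by (simp add: Heis_def)

lemma Heis_mult: "(x,y,z) \<otimes>\<^bsub>Heis n\<^esub> (x',y',z') = ((x + x') mod n, (y + y') mod n, (z + z' + x * y') mod n)"
  by (simp add: Heis_def)

lemma Heis_one: "\<one>\<^bsub>Heis n\<^esub> = (0,0,0)" by (simp add: Heis_def)

lemma Heis_assoc_raw:
  "(x,y,z) \<otimes>\<^bsub>Heis n\<^esub> (x',y',z') \<otimes>\<^bsub>Heis n\<^esub> (x'',y'',z'') = (x,y,z) \<otimes>\<^bsub>Heis n\<^esub> ((x',y',z') \<otimes>\<^bsub>Heis n\<^esub> (x'',y'',z''))"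
  apply (simp only: Heis_mult prod.inject)
  apply (intro conjI mod_eqI; unfold mdef; Groebner_Basis.algebra)
  done

lemma Heis_inv_raw:
  "((-x) mod n, (-y) mod n, (x*y - z) mod n) \<otimes>\<^bsub>Heis n\<^esub> (x,y,z) = (0,0,0)"
  apply (simp only: Heis_mult prod.inject)
  apply (intro conjI mod_0I; unfold mdef; Groebner_Basis.algebra)
  done

lemma group_Heis: assumes "n > 0" shows "group (Heis n)"
proof (rule groupI)
  show "\<one>\<^bsub>Heis n\<^esub> \<in> carrier (Heis n)" using assms by (simp add: Heis_def)
next
  fix a b assume "a \<in> carrier (Heis n)" "b \<in> carrier (Heis n)"
  then show "a \<otimes>\<^bsub>Heis n\<^esub> b \<in> carrier (Heis n)" using assms
    by (cases a; cases b; simp add: Heis_def)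
next
  fix a b c assume "a \<in> carrier (Heis n)" "b \<in> carrier (Heis n)" "c \<in> carrier (Heis n)"
  then show "a \<otimes>\<^bsub>Heis n\<^esub> b \<otimes>\<^bsub>Heis n\<^esub> c = a \<otimes>\<^bsub>Heis n\<^esub> (b \<otimes>\<^bsub>Heis n\<^esub> c)"
    using Heis_assoc_raw by (cases a; cases b; cases c) blast
next
  fix a assume "a \<in> carrier (Heis n)"
  then show "\<one>\<^bsub>Heis n\<^esub> \<otimes>\<^bsub>Heis n\<^esub> a = a"
    by (cases a; simp add: Heis_def)
next
  fix a assume "a \<in> carrier (Heis n)"
  then obtain x y z where a: "a = (x,y,z)" "0 \<le> x \<and> x < n \<and> 0 \<le> y \<and> y < n \<and> 0 \<le> z \<and> z < n"
    by (cases a; auto simp: Heis_def)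
  show "\<exists>b\<in>carrier (Heis n). b \<otimes>\<^bsub>Heis n\<^esub> a = \<one>\<^bsub>Heis n\<^esub>"
    apply (rule bexI[of _ "((-x) mod n, (-y) mod n, (x*y - z) mod n)"])
    using assms a Heis_inv_raw[where x=x and y=y and z=z and n=n] by (simp_all add: Heis_def)
qed


lemma F2_carrier: "w \<in> carrier F2 \<longleftrightarrow> is_reduced w" by (simp add: F2_def)
lemma F2_mult: "u \<otimes>\<^bsub>F2\<^esub> v = reduce (u @ v)" by (simp add: F2_def)

lemma reduce_reduced: "is_reduced w \<Longrightarrow> reduce w = w"
  by (induction w rule: is_reduced.induct) auto

lemma reduced_reduce: "is_reduced (reduce w)"
proof (induction w)
  case Nil then show ?case by simp
next
  case (Cons x xs)
  then show ?case
    by (cases "reduce xs"; cases "tl (reduce xs)") (auto split: list.splits)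
qed

lemma is_reduced_tl: "is_reduced (l # w) \<Longrightarrow> is_reduced w"
  by (cases w) auto

lemma hmult: "h \<in> hom G H \<Longrightarrow> x \<in> carrier G \<Longrightarrow> y \<in> carrier G \<Longrightarrow> h (x \<otimes>\<^bsub>G\<^esub> y) = h x \<otimes>\<^bsub>H\<^esub> h y"
  by (simp add: hom_def)

context
  fixes n :: int
  assumes npos: "n > 1"
begin

interpretation H: group "Heis n" using group_Heis npos by simp

lemma gens_closed: "heis_alpha \<in> carrier (Heis n)" "heis_beta \<in> carrier (Heis n)"
  using npos by (auto simp: heis_alpha_def heis_beta_def Heis_def)

lemma letter_img_closed: "letter_img n l \<in> carrier (Heis n)"
  using gens_closed by (auto simp: letter_img_def Let_def)

lemma heis_hom_Nil: "heis_hom n [] = \<one>\<^bsub>Heis n\<^esub>" by (simp add: heis_hom_def)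
lemma heis_hom_Cons: "heis_hom n (l # w) = letter_img n l \<otimes>\<^bsub>Heis n\<^esub> heis_hom n w"
  by (simp add: heis_hom_def)

lemma heis_hom_in_carrier: "heis_hom n w \<in> carrier (Heis n)"
  by (induction w) (simp_all add: heis_hom_Nil heis_hom_Cons letter_img_closed)

lemma heis_hom_append: "heis_hom n (u @ v) = heis_hom n u \<otimes>\<^bsub>Heis n\<^esub> heis_hom n v"
  by (induction u) (simp_all add: heis_hom_Nil heis_hom_Cons letter_img_closed heis_hom_in_carrier H.m_assoc)

lemma letter_img_cancel: "letter_img n l \<otimes>\<^bsub>Heis n\<^esub> letter_img n (letter_inv l) = \<one>\<^bsub>Heis n\<^esub>"
proof -
  define g where "g = (if snd l then heis_beta else heis_alpha)"
  have g: "g \<in> carrier (Heis n)"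
    using gens_closed by (auto simp: g_def)
  have "letter_img n l = (if fst l then inv\<^bsub>Heis n\<^esub> g else g)"
    by (simp add: letter_img_def g_def)
  moreover have "letter_img n (letter_inv l) = (if fst l then g else inv\<^bsub>Heis n\<^esub> g)"
    by (simp add: letter_img_def letter_inv_def g_def)
  ultimately show ?thesis using g by simp
qed

lemma heis_hom_reduce: "heis_hom n (reduce w) = heis_hom n w"
proof (induction w)
  case Nil then show ?case by simp
next
  case (Cons x xs)
  show ?case
  proof (cases "reduce xs")
    case Nil
    then show ?thesis using Cons.IH by (simp add: heis_hom_Cons)
  next
    case (Cons y ys)
    show ?thesis
    proof (cases "y = letter_inv x")
      case True
      have "heis_hom n (x # xs) = letter_img n x \<otimes>\<^bsub>Heis n\<^esub> (letter_img n y \<otimes>\<^bsub>Heis n\<^esub> heis_hom n ys)"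
        using Cons.IH \<open>reduce xs = y # ys\<close> by (simp add: heis_hom_Cons)
      also have "\<dots> = heis_hom n ys"
        using True letter_img_cancel[of x]
        by (simp add: H.m_assoc[symmetric] letter_img_closed heis_hom_in_carrier)
      finally show ?thesis using True \<open>reduce xs = y # ys\<close> by simp
    next
      case False
      then show ?thesis using Cons.IH \<open>reduce xs = y # ys\<close> by (simp add: heis_hom_Cons)
    qed
  qed
qed

lemma heis_hom_hom: "heis_hom n \<in> hom F2 (Heis n)"
  by (rule homI) (simp_all add: heis_hom_in_carrier F2_mult heis_hom_reduce heis_hom_append)

lemma homs_agree:
  assumes f: "f \<in> hom F2 (Heis n)" and f': "f' \<in> hom F2 (Heis n)"
    and ga: "f [(False,False)] = f' [(False,False)]"
    and gb: "f [(False,True)] = f' [(False,True)]"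
    and w: "w \<in> carrier F2"
  shows "f w = f' w"
proof -
  have one: "k [] = \<one>\<^bsub>Heis n\<^esub>" if k: "k \<in> hom F2 (Heis n)" for k
  proof -
    have c: "[] \<in> carrier F2" by (simp add: F2_carrier)
    have "k ([] \<otimes>\<^bsub>F2\<^esub> []) = k [] \<otimes>\<^bsub>Heis n\<^esub> k []" using k c by (simp add: hmult)
    moreover have "[] \<otimes>\<^bsub>F2\<^esub> [] = []" by (simp add: F2_mult)
    moreover have "k [] \<in> carrier (Heis n)" using k c by (simp add: hom_in_carrier)
    ultimately show ?thesis by simp
  qed
  have letr: "k [l] = (if fst l then inv\<^bsub>Heis n\<^esub> (k [(False, snd l)]) else k [(False, snd l)])"
    if k: "k \<in> hom F2 (Heis n)" for k l
  proof (cases "fst l")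
    case True
    have c1: "[l] \<in> carrier F2" "[(False, snd l)] \<in> carrier F2" by (simp_all add: F2_carrier)
    have "[l] \<otimes>\<^bsub>F2\<^esub> [(False, snd l)] = []"
      using True by (simp add: F2_mult letter_inv_def)
    then have "k [l] \<otimes>\<^bsub>Heis n\<^esub> k [(False, snd l)] = \<one>\<^bsub>Heis n\<^esub>"
      using k c1 one[OF k] by (simp add: hmult[symmetric])
    then have "inv\<^bsub>Heis n\<^esub> (k [(False, snd l)]) = k [l]"
      using k c1 by (intro H.inv_equality) (simp_all add: hom_in_carrier)
    then show ?thesis using True by simp
  next
    case False
    then show ?thesis by (cases l) simp
  qed
  have lets: "f [l] = f' [l]" for l
    using letr[OF f, of l] letr[OF f', of l] ga gb by (cases "snd l") simp_all
  have "is_reduced w" using w by (simp add: F2_carrier)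
  then show ?thesis
  proof (induction w)
    case Nil then show ?case using one[OF f] one[OF f'] by simp
  next
    case (Cons l w)
    have rw: "is_reduced w" using Cons.prems by (rule is_reduced_tl)
    have eq: "l # w = [l] \<otimes>\<^bsub>F2\<^esub> w"
      unfolding F2_mult by (simp only: append_Cons append_Nil reduce_reduced[OF Cons.prems])
    have c: "[l] \<in> carrier F2" "w \<in> carrier F2" using rw by (simp_all add: F2_carrier)
    have "f (l # w) = f [l] \<otimes>\<^bsub>Heis n\<^esub> f w" by (metis eq hmult[OF f c])
    moreover have "f' (l # w) = f' [l] \<otimes>\<^bsub>Heis n\<^esub> f' w" by (metis eq hmult[OF f' c])
    ultimately show ?case using Cons.IH[OF rw] lets[of l] by simp
  qed
qed

end


definition thetak :: "int \<Rightarrow> int \<Rightarrow> int \<times> int \<times> int \<Rightarrow> int \<times> int \<times> int \<Rightarrow> int \<times> int \<times> int \<Rightarrow> int \<times> int \<times> int" where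
  "thetak n k g h p = (case g of (a1,a2,a3) \<Rightarrow> case h of (b1,b2,b3) \<Rightarrow> case p of (x,y,z) \<Rightarrow>
     ((x*a1 + y*b1) mod n, (x*a2 + y*b2) mod n,
      (x*a3 + k*x*(x-1)*a1*a2 + y*b3 + k*y*(y-1)*b1*b2 + x*y*a1*b2
        + (z - x*y)*(a1*b2 - a2*b1)) mod n))"

definition theta :: "int \<Rightarrow> int \<times> int \<times> int \<Rightarrow> int \<times> int \<times> int \<Rightarrow> int \<times> int \<times> int \<Rightarrow> int \<times> int \<times> int" where
  "theta n = thetak n ((n+1) div 2)"

lemma thetak_mult_raw:
  assumes k: "2 * k = n + 1"
  shows "thetak n k (a1,a2,a3) (b1,b2,b3) ((x,y,z) \<otimes>\<^bsub>Heis n\<^esub> (x',y',z')) =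
    thetak n k (a1,a2,a3) (b1,b2,b3) (x,y,z) \<otimes>\<^bsub>Heis n\<^esub> thetak n k (a1,a2,a3) (b1,b2,b3) (x',y',z')"
  unfolding Heis_mult thetak_def prod.case prod.inject
  apply (intro conjI mod_eqI)
  subgoal apply (simp only: mdef) by Groebner_Basis.algebra
  subgoal apply (simp only: mdef) by Groebner_Basis.algebra
  subgoal
    proof -
      have nk: "n = 2 * k - 1" using k by simp
      show ?thesis apply (simp only: mdef) unfolding nk by Groebner_Basis.algebra
    qed
  done

lemma theta_mult_raw:
  assumes "odd n"
  shows "theta n g h (p \<otimes>\<^bsub>Heis n\<^esub> q) = theta n g h p \<otimes>\<^bsub>Heis n\<^esub> theta n g h q"
proof -
  have k: "2 * ((n+1) div 2) = n + 1" using assms by presburger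
  show ?thesis unfolding theta_def
    using thetak_mult_raw[OF k] by (cases g; cases h; cases p; cases q) simp
qed

lemma theta_closed: "n > 0 \<Longrightarrow> theta n g h p \<in> carrier (Heis n)"
  by (cases g; cases h; cases p) (simp add: theta_def thetak_def Heis_def)

lemma theta_hom: "odd n \<Longrightarrow> n > 0 \<Longrightarrow> theta n g h \<in> hom (Heis n) (Heis n)"
  apply (rule homI)
   apply (simp add: theta_closed)
  apply (simp add: theta_mult_raw)
  done


lemma F2_closed: "u \<in> carrier F2 \<Longrightarrow> v \<in> carrier F2 \<Longrightarrow> u \<otimes>\<^bsub>F2\<^esub> v \<in> carrier F2"
  by (simp add: F2_carrier F2_mult reduced_reduce)

lemma F2_iso_inv:
  assumes "h \<in> iso F2 F2"
  shows "inv_into (carrier F2) h \<in> iso F2 F2"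
proof -
  have h: "h \<in> hom F2 F2" "bij_betw h (carrier F2) (carrier F2)"
    using assms by (auto simp add: iso_def bij_betw_inv_into)
  then have HG: "bij_betw (inv_into (carrier F2) h) (carrier F2) (carrier F2)"
    by (simp add: bij_betw_inv_into)
  have "inv_into (carrier F2) h \<in> hom F2 F2"
    unfolding hom_def
  proof safe
    show *: "\<And>x. x \<in> carrier F2 \<Longrightarrow> inv_into (carrier F2) h x \<in> carrier F2"
      by (meson HG bij_betwE)
    show "inv_into (carrier F2) h (x \<otimes>\<^bsub>F2\<^esub> y) = inv_into (carrier F2) h x \<otimes>\<^bsub>F2\<^esub> inv_into (carrier F2) h y"
      if "x \<in> carrier F2" "y \<in> carrier F2" for x y
    proof (rule inv_into_f_eq)
      show "inj_on h (carrier F2)"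
        using bij_betw_def h(2) by blast
      show "inv_into (carrier F2) h x \<otimes>\<^bsub>F2\<^esub> inv_into (carrier F2) h y \<in> carrier F2"
        by (simp add: * that F2_closed)
      show "h (inv_into (carrier F2) h x \<otimes>\<^bsub>F2\<^esub> inv_into (carrier F2) h y) = x \<otimes>\<^bsub>F2\<^esub> y"
        using h bij_betw_inv_into_right [of h] unfolding hom_def by (simp add: "*" that)
    qed
  qed
  then show ?thesis
    by (simp add: Group.iso_def bij_betw_inv_into h)
qed

lemma hom_image_R:
  assumes odd: "odd n" and n3: "n \<ge> 3" and psi: "\<psi> \<in> hom F2 F2"
  shows "\<psi> ` R_Heis n \<subseteq> R_Heis n"
proof
  have n1: "n > 1" using n3 by simp
  interpret H: group "Heis n" using group_Heis n1 by simp
  have hh: "heis_hom n \<in> hom F2 (Heis n)" using heis_hom_hom[OF n1] .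
  define f where "f = heis_hom n \<circ> \<psi>"
  have f: "f \<in> hom F2 (Heis n)" unfolding f_def using psi hh by (rule hom_compose)
  have ca: "[(False,False)] \<in> carrier F2" and cb: "[(False,True)] \<in> carrier F2"
    by (simp_all add: F2_carrier)
  define g where "g = f [(False,False)]"
  define h where "h = f [(False,True)]"
  have g: "g \<in> carrier (Heis n)" unfolding g_def using f ca by (rule hom_in_carrier)
  have h: "h \<in> carrier (Heis n)" unfolding h_def using f cb by (rule hom_in_carrier)
  define f' where "f' = theta n g h \<circ> heis_hom n"
  have f': "f' \<in> hom F2 (Heis n)" unfolding f'_def
    using hh theta_hom[OF odd, of g h] n1 by (intro hom_compose) auto
  have ha: "heis_hom n [(False,False)] = (1,0,0)"
    using n1 by (simp add: heis_hom_def letter_img_def heis_alpha_def Heis_def)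
  have hb: "heis_hom n [(False,True)] = (0,1,0)"
    using n1 by (simp add: heis_hom_def letter_img_def heis_beta_def Heis_def)
  have t1: "theta n g h (1,0,0) = g"
    using g h by (cases g; cases h) (simp add: theta_def thetak_def Heis_def)
  have t2: "theta n g h (0,1,0) = h"
    using g h by (cases g; cases h) (simp add: theta_def thetak_def Heis_def)
  have t0: "theta n g h (0,0,0) = (0,0,0)"
    by (cases g; cases h) (simp add: theta_def thetak_def)
  fix v assume "v \<in> \<psi> ` R_Heis n"
  then obtain w where w: "w \<in> R_Heis n" "v = \<psi> w" by blast
  have wc: "w \<in> carrier F2" and w1: "heis_hom n w = (0,0,0)"
    using w(1) by (simp_all add: R_Heis_def kernel_def Heis_def)
  have "f w = f' w"
    by (rule homs_agree[OF n1 f f' _ _ wc])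
       (simp_all add: f'_def ha hb t1 t2 g_def[symmetric] h_def[symmetric])
  then have "heis_hom n v = (0,0,0)" using w1 t0 by (simp add: f_def f'_def w(2))
  moreover have "v \<in> carrier F2" using psi wc w(2) by (simp add: hom_in_carrier)
  ultimately show "v \<in> R_Heis n" by (simp add: R_Heis_def kernel_def Heis_def)
qed

theorem lemma2p16:
  fixes n :: int and \<phi> :: "letter list \<Rightarrow> letter list"
  assumes "odd n" and "n \<ge> 3"
    and "\<phi> \<in> iso F2 F2"
  shows "\<phi> ` R_Heis n = R_Heis n"
proof
  show "\<phi> ` R_Heis n \<subseteq> R_Heis n"
    using assms by (intro hom_image_R) (auto simp: iso_def)
next
  define \<psi> where "\<psi> = inv_into (carrier F2) \<phi>"
  have psi: "\<psi> \<in> iso F2 F2" unfolding \<psi>_def using F2_iso_inv assms(3) .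
  have sub: "\<psi> ` R_Heis n \<subseteq> R_Heis n"
    using assms psi by (intro hom_image_R) (auto simp: iso_def)
  have bij: "bij_betw \<phi> (carrier F2) (carrier F2)" using assms(3) by (simp add: iso_def)
  show "R_Heis n \<subseteq> \<phi> ` R_Heis n"
  proof
    fix w assume w: "w \<in> R_Heis n"
    then have wc: "w \<in> carrier F2" by (simp add: R_Heis_def kernel_def)
    have "\<phi> (\<psi> w) = w" unfolding \<psi>_def using bij wc by (simp add: bij_betw_inv_into_right)
    moreover have "\<psi> w \<in> R_Heis n" using sub w by blast
    ultimately show "w \<in> \<phi> ` R_Heis n" by (metis image_eqI)
  qed
qed

end
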